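(* Let $L\ge3$ be odd and let $\mathcal{C}$ be an equi-difference code in $\mathsf{CAC}(L,3)$ with leave $\Lambda$. If $|\Lambda|<4$ and $\{L/3,2L/3\}\not\subseteq\Lambda$, then $\mathcal{C}$ is optimal; moreover $|\mathcal{C}|=M^e(L,3)=M(L,3)$.
   Context: $\mathcal{P}(L,\omega)$ is the set of $\omega$-element subsets of $\mathbb{Z}_L$. For $\mathcal{I}\in\mathcal{P}(L,\omega)$: $d(\mathcal{I})=\{a-b \bmod L: a,b\in\mathcal{I}\}$, $d^*(\mathcal{I})=d(\mathcal{I})\setminus\{0\}$. A conflict-avoiding code (CAC) of length $L$ and weight $\omega$ is a set $\mathcal{C}\subseteq\mathcal{P}(L,\omega)$ with $d^*(\mathcal{I})\cap d^*(\mathcal{J})=\emptyset$ for all distinct $\mathcal{I},\mathcal{J}\in\mathcal{C}$; $\mathsf{CAC}(L,\omega)$ is the class of these codes, $M(L,\omega)$ their maximum size, and a code of size $M(L,\omega)$ is optimal. A codeword is equi-difference if it equals $\{0,g,2g,\dots,(\omega-1)g\}$ (mod $L$) for some $g$; a code is equi-difference if all its codewords are; $M^e(L,\omega)$ is the maximum size of an equi-difference code in $\mathsf{CAC}(L,\omega)$. The leave of $\mathcal{C}$ is $\Lambda=\mathbb{Z}_L\setminus\bigcup_{\mathcal{I}\in\mathcal{C}}d(\mathcal{I})$. (When $3\nmid L$ the condition $\{L/3,2L/3\}\not\subseteq\Lambda$ is vacuous.) *)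

theory Defs
  imports Main
begin

text \<open>Z_L is represented by the natural numbers {0..<L} with arithmetic mod L.\<close>

definition dset :: "nat \<Rightarrow> nat set \<Rightarrow> nat set" where
  "dset L I = {(a + L - b) mod L | a b. a \<in> I \<and> b \<in> I}"

definition dstar :: "nat \<Rightarrow> nat set \<Rightarrow> nat set" where
  "dstar L I = dset L I - {0}"

definition Pset :: "nat \<Rightarrow> nat \<Rightarrow> nat set set" where
  "Pset L w = {I. I \<subseteq> {..<L} \<and> card I = w}"

definition is_CAC :: "nat \<Rightarrow> nat \<Rightarrow> nat set set \<Rightarrow> bool" where
  "is_CAC L w C \<longleftrightarrow> C \<subseteq> Pset L w \<and>
     (\<forall>I\<in>C. \<forall>J\<in>C. I \<noteq> J \<longrightarrow> dstar L I \<inter> dstar L J = {})"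

definition equi_diff_word :: "nat \<Rightarrow> nat \<Rightarrow> nat set \<Rightarrow> bool" where
  "equi_diff_word L w I \<longleftrightarrow> (\<exists>g::nat. I = {(i * g) mod L | i. i < w})"

definition equi_diff_code :: "nat \<Rightarrow> nat \<Rightarrow> nat set set \<Rightarrow> bool" where
  "equi_diff_code L w C \<longleftrightarrow> (\<forall>I\<in>C. equi_diff_word L w I)"

definition M_CAC :: "nat \<Rightarrow> nat \<Rightarrow> nat" where
  "M_CAC L w = Max {card C | C. is_CAC L w C}"

definition Me_CAC :: "nat \<Rightarrow> nat \<Rightarrow> nat" where
  "Me_CAC L w = Max {card C | C. is_CAC L w C \<and> equi_diff_code L w C}"

definition optimal_CAC :: "nat \<Rightarrow> nat \<Rightarrow> nat set set \<Rightarrow> bool" where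
  "optimal_CAC L w C \<longleftrightarrow> is_CAC L w C \<and> card C = M_CAC L w"

definition leave :: "nat \<Rightarrow> nat set set \<Rightarrow> nat set" where
  "leave L C = {..<L} - (\<Union>I\<in>C. dset L I)"

end

theory Submission
  imports Defs
begin


abbreviation D :: "nat \<Rightarrow> nat \<Rightarrow> nat \<Rightarrow> nat" where
  "D L x y \<equiv> (x + L - y) mod L"

lemma Dif: "x < L \<Longrightarrow> y < L \<Longrightarrow> D L x y = (if y \<le> x then x - y else x + L - y)"
proof (cases "y \<le> x")
  case True
  assume "x < L" "y < L"
  then have "x + L - y = (x - y) + L" using True by simp
  then have "D L x y = (x - y) mod L" by simp
  then show ?thesis using True \<open>x < L\<close> by simp
next
  case False
  assume "x < L" "y < L"
  then show ?thesis using False by simp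
qed

lemma Dlin: "x < L \<Longrightarrow> y < L \<Longrightarrow> D L x y < L \<and> (D L x y + y = x \<or> D L x y + y = x + L)"
  using Dif[of x L y] by (cases "y \<le> x") auto

lemma odd2: "odd L \<Longrightarrow> 2 * x \<noteq> (L::nat)"
  by auto

lemma mem_dset: "z \<in> dset L I \<longleftrightarrow> (\<exists>x\<in>I. \<exists>y\<in>I. z = D L x y)"
  by (auto simp: dset_def)

lemma mem_dstar: "z \<in> dstar L I \<longleftrightarrow> z \<noteq> 0 \<and> (\<exists>x\<in>I. \<exists>y\<in>I. z = D L x y)"
  by (auto simp: dstar_def mem_dset)

lemma dstar_sub: "L > 0 \<Longrightarrow> dstar L I \<subseteq> {1..<L}"
  by (auto simp: mem_dstar)

lemma finite_dstar: "L > 0 \<Longrightarrow> finite (dstar L I)"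
  by (meson dstar_sub finite_atLeastLessThan finite_subset)

lemma dstar3: assumes "a < L" "b < L" "c < L" "a \<noteq> b" "b \<noteq> c" "a \<noteq> c"
  shows "dstar L {a,b,c} = {D L a b, D L b a, D L a c, D L c a, D L b c, D L c b}"
proof -
  have nz: "\<And>x y. x < L \<Longrightarrow> y < L \<Longrightarrow> x \<noteq> y \<Longrightarrow> D L x y \<noteq> 0"
    using Dif by fastforce
  show ?thesis
    unfolding set_eq_iff mem_dstar using assms nz by auto
qed

lemma Dpos: "x < L \<Longrightarrow> y < L \<Longrightarrow> x \<noteq> y \<Longrightarrow> D L x y > 0"
  using Dif[of x L y] by (cases "y \<le> x") auto

lemma Dsum: "x < L \<Longrightarrow> y < L \<Longrightarrow> x \<noteq> y \<Longrightarrow> D L x y + D L y x = L"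
  using Dif[of x L y] Dif[of y L x] by (cases "y \<le> x") auto

lemma Dneg: "odd L \<Longrightarrow> x < L \<Longrightarrow> y < L \<Longrightarrow> x \<noteq> y \<Longrightarrow> D L x y \<noteq> D L y x"
  using Dsum[of x L y] odd2[of L "D L x y"] by auto

lemma Dinj1: assumes "x < L" "y < L" "z < L" "D L x y = D L z y" shows "x = z"
proof -
  have h1: "D L x y + y = x \<or> D L x y + y = x + L" using Dlin assms by blast
  have h2: "D L x y + y = z \<or> D L x y + y = z + L" using Dlin[of z L y] assms by simp
  show ?thesis using h1 h2 assms by (elim disjE; linarith)
qed

lemma Dinj2: assumes "x < L" "y < L" "z < L" "D L y x = D L y z" shows "x = z"
proof -
  have h1: "D L y x + x = y \<or> D L y x + x = y + L" using Dlin assms by blast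
  have h2: "D L y x + z = y \<or> D L y x + z = y + L" using Dlin[of y L z] assms by simp
  have h3: "D L y x < L" using Dlin assms by blast
  show ?thesis using h1 h2 h3 assms by (elim disjE; linarith)
qed

lemma card4: "a \<noteq> b \<Longrightarrow> a \<noteq> c \<Longrightarrow> a \<noteq> d \<Longrightarrow> b \<noteq> c \<Longrightarrow> b \<noteq> d \<Longrightarrow> c \<noteq> d \<Longrightarrow> card {a,b,c,d} = 4"
  by simp

lemma small_dstar:
  assumes "odd L" "I \<subseteq> {..<L}" "card I = 3" "card (dstar L I) < 4"
  shows "3 dvd L \<and> dstar L I = {L div 3, 2*L div 3}"
proof -
  obtain a b c where I: "I = {a,b,c}" and ab: "a \<noteq> b" and bc: "b \<noteq> c" and ac: "a \<noteq> c"
    using assms(3) card_3_iff by metis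
  have lt: "a < L" "b < L" "c < L" using assms(2) I by auto
  have ds: "dstar L I = {D L a b, D L b a, D L b c, D L c b, D L c a, D L a c}"
    using dstar3[OF lt ab bc ac] I by auto
  have fin: "finite (dstar L I)" using finite_dstar lt by simp
  have gen: "D L y z = D L x y" if xy: "x \<noteq> y" "y \<noteq> z" "x \<noteq> z" and xyl: "x < L" "y < L" "z < L"
     and sub: "{D L x y, D L y x, D L y z, D L z y} \<subseteq> dstar L I" for x y z
  proof (rule ccontr)
    assume ne: "D L y z \<noteq> D L x y"
    have "D L x y \<noteq> D L y x" using Dneg assms(1) xy xyl by blast
    moreover have "D L y z \<noteq> D L z y" using Dneg assms(1) xy xyl by blast
    moreover have "D L x y \<noteq> D L z y" using Dinj1 xy xyl by blast
    moreover have "D L y x \<noteq> D L y z" using Dinj2 xy xyl by blast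
    moreover have "D L y x \<noteq> D L z y" using ne Dsum[of x L y] Dsum[of y L z] xy xyl by auto
    ultimately have "card {D L x y, D L y x, D L y z, D L z y} = 4"
      using ne by (intro card4) auto
    moreover have "card {D L x y, D L y x, D L y z, D L z y} \<le> card (dstar L I)"
      using fin sub by (intro card_mono) auto
    ultimately show False using assms(4) by simp
  qed
  have c3: "D L b c = D L a b" using gen[of a b c] ab bc ac lt ds by auto
  have c5: "D L c a = D L b c" using gen[of b c a] ab bc ac lt ds by auto
  define u where "u = D L a b"
  have e1: "u + b = a \<or> u + b = a + L" using Dlin lt u_def by simp
  have e3: "u + c = b \<or> u + c = b + L" using Dlin lt u_def c3 by metis
  have e5: "u + a = c \<or> u + a = c + L" using Dlin lt u_def c3 c5 by metis
  have ul: "u < L" "u > 0" using Dlin Dpos lt ab u_def by auto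
  have "3 * u = L \<or> 3 * u = 2 * L"
    using e1 e3 e5 ul lt by (elim disjE; linarith)
  moreover have d: "D L b a = L - u" "D L c b = L - u" "D L a c = L - u"
    using Dsum lt ab bc ac u_def c3 c5 by (metis add_diff_cancel_left')+
  have d2: "D L a b = u" "D L b c = u" "D L c a = u" using u_def c3 c5 by auto
  have s: "dstar L I = {u, L - u}" unfolding ds d d2 by auto
  show ?thesis
  proof (cases "3 * u = L")
    case True
    then have "L div 3 = u" "2 * L div 3 = L - u" "3 dvd L" by auto
    then show ?thesis unfolding s by auto
  next
    case False
    then have "3 * u = 2 * L" using \<open>3 * u = L \<or> 3 * u = 2 * L\<close> by simp
    then have "L = 3 * (L - u)" by simp
    then have "L div 3 = L - u" "2 * L div 3 = u" "3 dvd L" using \<open>3 * u = 2 * L\<close> by (metis dvd_triv_left nonzero_mult_div_cancel_left zero_neq_numeral)+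
    then show ?thesis unfolding s by auto
  qed
qed



lemma equi_form:
  assumes "equi_diff_word L 3 I" "L > 0"
  shows "\<exists>h k. h < L \<and> k = (if 2*h < L then 2*h else 2*h - L) \<and> I = {0,h,k}"
proof -
  obtain g where g: "I = {(i * g) mod L | i. i < 3}" using assms(1) equi_diff_word_def by blast
  have "I = {0, g mod L, (2*g) mod L}"
  proof -
    have "{(i * g) mod L | i. i < (3::nat)} = (\<lambda>i. (i*g) mod L) ` {..<3}" by auto
    moreover have "{..<3::nat} = {0,1,2}" by auto
    ultimately show ?thesis using g by simp
  qed
  moreover have "(2*g) mod L = (2*(g mod L)) mod L" by (simp add: mod_mult_right_eq)
  moreover have "(2*(g mod L)) mod L = (if 2*(g mod L) < L then 2*(g mod L) else 2*(g mod L) - L)"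
  proof (cases "2*(g mod L) < L")
    case True then show ?thesis by simp
  next
    case False
    have "g mod L < L" using assms(2) by simp
    then have "2*(g mod L) - L < L" by linarith
    then show ?thesis using False le_mod_geq[of L "2*(g mod L)"] by simp
  qed
  ultimately have "I = {0, g mod L, (if 2*(g mod L) < L then 2*(g mod L) else 2*(g mod L) - L)}"
    by simp
  moreover have "g mod L < L" using assms(2) by simp
  ultimately show ?thesis by blast
qed

lemma equi_dstar:
  assumes "odd L" "h < L" "k = (if 2*h < L then 2*h else 2*h - L)" "I = {0,h,k}" "card I = 3"
  shows "dstar L I \<subseteq> {h, L - h, k, L - k}"
proof -
  have h0: "h \<noteq> 0" "k \<noteq> 0" "h \<noteq> k" using assms(4,5) by (auto simp: card_insert_if split: if_splits)
  have kl: "k < L" using assms(2,3) by auto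
  have "D L k h = h"
  proof -
    have "D L k h + h = k \<or> D L k h + h = k + L" "D L k h < L" using Dlin kl assms(2) by blast+
    then show ?thesis using assms(2,3) h0 by (elim disjE; simp split: if_splits; linarith)
  qed
  moreover have "D L h k = L - h" using Dsum[of h L k] \<open>D L k h = h\<close> h0 kl assms(2) by simp
  moreover have "D L h 0 = h" "D L k 0 = k" using assms(2) kl by simp_all
  moreover have "D L 0 h = L - h" "D L 0 k = L - k" using assms(2) kl Dif h0 by auto
  moreover have "D L 0 0 = 0" "D L h h = 0" "D L k k = 0" by simp_all
  ultimately have all: "\<forall>x\<in>{0,h,k}. \<forall>y\<in>{0,h,k}. D L x y \<in> {0, h, L - h, k, L - k}"
    by (simp only: ball_simps insert_iff) simp
  show ?thesis
  proof
    fix z assume "z \<in> dstar L I"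
    then have "z \<noteq> 0" "\<exists>x\<in>{0,h,k}. \<exists>y\<in>{0,h,k}. z = D L x y" unfolding mem_dstar assms(4) by blast+
    then obtain x y where xy: "x \<in> {0,h,k}" "y \<in> {0,h,k}" "z = D L x y" by blast
    then have "z \<in> {0, h, L - h, k, L - k}" using bspec[OF bspec[OF all xy(1)] xy(2)] by simp
    then show "z \<in> {h, L - h, k, L - k}" using \<open>z \<noteq> 0\<close> by blast
  qed
qed

lemma equi_card4:
  assumes "odd L" "L > 0" "equi_diff_word L 3 I" "card I = 3"
  shows "card (dstar L I) \<le> 4"
proof -
  obtain h k where hk: "h < L" "k = (if 2*h < L then 2*h else 2*h - L)" "I = {0,h,k}"
    using equi_form assms by blast
  have "card (dstar L I) \<le> card {h, L - h, k, L - k}"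
    using equi_dstar[OF assms(1) hk assms(4)] by (intro card_mono) auto
  also have "\<dots> \<le> 4" using card_length[of "[h, L - h, k, L - k]"] by simp
  finally show ?thesis .
qed

lemma equi_third:
  assumes "odd L" "L > 0" "equi_diff_word L 3 I" "card I = 3" "3 dvd L"
    and "L div 3 \<in> dstar L I \<or> 2 * L div 3 \<in> dstar L I"
  shows "card (dstar L I) < 4"
proof -
  obtain h k where hk: "h < L" "k = (if 2*h < L then 2*h else 2*h - L)" "I = {0,h,k}"
    using equi_form assms by blast
  have sub: "dstar L I \<subseteq> {h, L - h, k, L - k}" using equi_dstar[OF assms(1) hk assms(4)] .
  obtain t where t: "L = 3 * t" using assms(5) by blast
  have "L div 3 = t" "2 * L div 3 = 2 * t" using t by auto
  then have "t \<in> {h, L - h, k, L - k} \<or> 2 * t \<in> {h, L - h, k, L - k}" using sub assms(6) by auto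
  then have o: "t = h \<or> t = L - h \<or> t = k \<or> t = L - k \<or> 2*t = h \<or> 2*t = L - h \<or> 2*t = k \<or> 2*t = L - k"
    by auto
  have P1: "L \<noteq> 2*(3*h)" using odd2 assms(1) by metis
  have P2: "2*h \<noteq> 5*t"
  proof -
    have "odd t" using assms(1) t by simp
    then show ?thesis by presburger
  qed
  have L0: "L > 0" using assms(2) .
  have "k = L - h"
  proof (cases "2*h < L")
    case True
    then have "k = 2*h" using hk(2) by simp
    then show ?thesis using o t hk(1) P1 L0 True by (elim disjE; linarith)
  next
    case False
    then have "k = 2*h - L" using hk(2) by simp
    then show ?thesis using o t hk(1) False P2 L0 by (elim disjE; linarith)
  qed
  then have "dstar L I \<subseteq> {h, L - h}" using sub hk(1) by auto
  then have "card (dstar L I) \<le> card {h, L - h}" by (intro card_mono) auto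
  also have "\<dots> \<le> 2" by (simp add: card_insert_if)
  finally show ?thesis by simp
qed



lemma CAC_basic:
  assumes "is_CAC L w C"
  shows "finite C" "\<And>I. I \<in> C \<Longrightarrow> I \<subseteq> {..<L} \<and> card I = w"
    "\<And>I J. I \<in> C \<Longrightarrow> J \<in> C \<Longrightarrow> I \<noteq> J \<Longrightarrow> dstar L I \<inter> dstar L J = {}"
proof -
  have "C \<subseteq> Pow {..<L}" using assms by (auto simp: is_CAC_def Pset_def)
  then show "finite C" by (rule finite_subset) simp
  show "\<And>I. I \<in> C \<Longrightarrow> I \<subseteq> {..<L} \<and> card I = w" using assms by (auto simp: is_CAC_def Pset_def)
  show "\<And>I J. I \<in> C \<Longrightarrow> J \<in> C \<Longrightarrow> I \<noteq> J \<Longrightarrow> dstar L I \<inter> dstar L J = {}"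
    using assms by (auto simp: is_CAC_def)
qed

lemma thirds: "3 \<le> (L::nat) \<Longrightarrow> 0 < L div 3 \<and> L div 3 < 2 * L div 3 \<and> 2 * L div 3 < L"
  by presburger

lemma count:
  assumes "is_CAC L 3 C" "odd L" "L \<ge> 3"
  shows "\<exists>S \<subseteq> C. card S \<le> 1 \<and> (S \<noteq> {} \<longrightarrow> 3 dvd L)
     \<and> (\<forall>I\<in>S. dstar L I = {L div 3, 2*L div 3}) \<and> (\<forall>I\<in>C-S. card (dstar L I) \<ge> 4)
     \<and> card (\<Union>I\<in>C. dstar L I) = 2*card S + (\<Sum>I\<in>C-S. card (dstar L I))
     \<and> card (\<Union>I\<in>C. dstar L I) \<le> L - 1"
proof -
  note b = CAC_basic[OF assms(1)]
  define S where "S = {I\<in>C. card (dstar L I) < 4}"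
  have SC: "S \<subseteq> C" unfolding S_def by auto
  have Sp: "3 dvd L \<and> dstar L I = {L div 3, 2*L div 3}" if "I \<in> S" for I
    using small_dstar[OF assms(2)] b(2) that SC unfolding S_def by blast
  have th: "0 < L div 3 \<and> L div 3 < 2 * L div 3 \<and> 2 * L div 3 < L" using thirds assms(3) .
  have two: "card {L div 3, 2*L div 3} = 2" using th by simp
  have finS: "finite S" using b(1) SC finite_subset by blast
  have cS: "card S \<le> 1"
  proof -
    have "\<forall>I\<in>S. \<forall>J\<in>S. I = J"
    proof (intro ballI, rule ccontr)
      fix I J assume "I \<in> S" "J \<in> S" "I \<noteq> J"
      then have "dstar L I \<inter> dstar L J = {}" using b(3) SC by blast
      moreover have "L div 3 \<in> dstar L I \<inter> dstar L J" using Sp \<open>I \<in> S\<close> \<open>J \<in> S\<close> by auto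
      ultimately show False by blast
    qed
    then show ?thesis using card_le_Suc0_iff_eq[OF finS] by simp
  qed
  have S3: "S \<noteq> {} \<longrightarrow> 3 dvd L" using Sp by blast
  have rest: "\<forall>I\<in>C-S. card (dstar L I) \<ge> 4" unfolding S_def by auto
  have L0: "L > 0" using assms(3) by simp
  have cu: "card (\<Union>I\<in>C. dstar L I) = (\<Sum>I\<in>C. card (dstar L I))"
    using b(1) b(3) finite_dstar[OF L0] by (intro card_UN_disjoint) auto
  also have "\<dots> = (\<Sum>I\<in>C-S. card (dstar L I)) + (\<Sum>I\<in>S. card (dstar L I))"
    using sum.subset_diff[OF SC b(1)] .
  also have "(\<Sum>I\<in>S. card (dstar L I)) = (\<Sum>I\<in>S. 2)" using Sp two by (intro sum.cong) auto
  also have "\<dots> = 2 * card S" by simp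
  finally have eq: "card (\<Union>I\<in>C. dstar L I) = 2*card S + (\<Sum>I\<in>C-S. card (dstar L I))" by simp
  have "(\<Union>I\<in>C. dstar L I) \<subseteq> {1..<L}" using dstar_sub[OF L0] by blast
  then have "card (\<Union>I\<in>C. dstar L I) \<le> card {1..<L}" by (intro card_mono) auto
  then have le: "card (\<Union>I\<in>C. dstar L I) \<le> L - 1" by simp
  show ?thesis using SC cS S3 Sp rest eq le by blast
qed

lemma UB:
  assumes "is_CAC L 3 C" "odd L" "L \<ge> 3"
  shows "4 * card C \<le> L + 1 \<and> (\<not> 3 dvd L \<longrightarrow> 4 * card C \<le> L - 1)"
proof -
  obtain S where S: "S \<subseteq> C" "card S \<le> 1" "S \<noteq> {} \<longrightarrow> 3 dvd L"
     "\<forall>I\<in>C-S. card (dstar L I) \<ge> 4"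
     "card (\<Union>I\<in>C. dstar L I) = 2*card S + (\<Sum>I\<in>C-S. card (dstar L I))"
     "card (\<Union>I\<in>C. dstar L I) \<le> L - 1"
    using count[OF assms] by blast
  have fin: "finite C" using CAC_basic[OF assms(1)] by blast
  have "card (C - S) * 4 \<le> (\<Sum>I\<in>C-S. card (dstar L I))"
    using sum_bounded_below[of "C - S" 4 "\<lambda>I. card (dstar L I)"] S(4) by simp
  moreover have "card (C - S) = card C - card S" using card_Diff_subset S(1) fin finite_subset by blast
  moreover have "card S \<le> card C" using S(1) fin card_mono by blast
  moreover have "\<not> 3 dvd L \<Longrightarrow> card S = 0" using S(3) fin S(1) finite_subset by fastforce
  ultimately show ?thesis using S(2,5,6) by auto
qed



lemma dset_insert0: assumes "I \<noteq> {}" shows "dset L I = insert 0 (dstar L I)"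
proof -
  obtain x where "x \<in> I" using assms by blast
  moreover have "D L x x = 0" by simp
  ultimately have "0 \<in> dset L I" unfolding mem_dset by metis
  then show ?thesis unfolding dstar_def by blast
qed

lemma q4: "(4::nat)*n' \<le> 4*n + 2 \<Longrightarrow> n' \<le> n" by linarith
lemma ev4: "(lam::nat) + 2 * k = 2*m \<Longrightarrow> lam < 4 \<Longrightarrow> lam \<le> 2"
proof -
  assume a: "lam + 2 * k = 2*m" "lam < 4"
  then have b: "lam = 2 * (m - k)" by linarith
  then have "m - k < 2" using a(2) by linarith
  then show "lam \<le> 2" using b by linarith
qed
lemma arith0: "(4::nat)*n' \<le> L - 1 \<Longrightarrow> lam + 1 + u = L \<Longrightarrow> u = 2*s + 4*(n - s) \<Longrightarrow> s = 0 \<Longrightarrow> L = 2*m+1 \<Longrightarrow> lam < 4 \<Longrightarrow> n' \<le> n"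
proof -
  assume a: "(4::nat)*n' \<le> L - 1" "lam + 1 + u = L" "u = 2*s + 4*(n - s)" "s = 0" "L = 2*m+1" "lam < 4"
  have u: "u = 4 * n" using a(3,4) by simp
  have "lam + 2 * (2*n) = 2*m" using a(2,5) u by linarith
  then have "lam \<le> 2" using ev4 a(6) by blast
  then have "4*n' \<le> 4*n + 2" using a(1,2,5) u by linarith
  then show "n' \<le> n" by (rule q4)
qed
lemma arith1: "(4::nat)*n' \<le> L + 1 \<Longrightarrow> lam + 1 + u = L \<Longrightarrow> u = 2*s + 4*(n - s) \<Longrightarrow> s = 1 \<Longrightarrow> s \<le> n \<Longrightarrow> L = 2*m+1 \<Longrightarrow> lam < 4 \<Longrightarrow> n' \<le> n"
proof -
  assume a: "(4::nat)*n' \<le> L + 1" "lam + 1 + u = L" "u = 2*s + 4*(n - s)" "s = 1" "s \<le> n" "L = 2*m+1" "lam < 4"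
  have u: "u + 2 = 4 * n" using a(3,4,5) by simp
  have "lam + 2 * (2*n - 1) = 2*m" using a(2,5,6) u by linarith
  then have "lam \<le> 2" using ev4 a(7) by blast
  then have "4*n' \<le> 4*n + 2" using a(1,2,6) u by linarith
  then show "n' \<le> n" by (rule q4)
qed

theorem mainTheorem11:
  fixes L :: nat and C :: "nat set set"
  assumes "L \<ge> 3" and "odd L"
    and "is_CAC L 3 C" and "equi_diff_code L 3 C"
    and "card (leave L C) < 4"
    and "\<not> (3 dvd L \<and> {L div 3, 2 * L div 3} \<subseteq> leave L C)"
  shows "optimal_CAC L 3 C \<and> card C = Me_CAC L 3 \<and> Me_CAC L 3 = M_CAC L 3"
proof -
  note b = CAC_basic[OF assms(3)]
  have L0: "L > 0" using assms(1) by simp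
  obtain S where S: "S \<subseteq> C" "card S \<le> 1" "S \<noteq> {} \<longrightarrow> 3 dvd L"
     "\<forall>I\<in>S. dstar L I = {L div 3, 2*L div 3}"
     "\<forall>I\<in>C-S. card (dstar L I) \<ge> 4"
     "card (\<Union>I\<in>C. dstar L I) = 2*card S + (\<Sum>I\<in>C-S. card (dstar L I))"
     "card (\<Union>I\<in>C. dstar L I) \<le> L - 1"
    using count[OF assms(3,2,1)] by blast
  have ew: "equi_diff_word L 3 I" if "I \<in> C" for I using assms(4) that equi_diff_code_def by blast
  have th: "0 < L div 3 \<and> L div 3 < 2 * L div 3 \<and> 2 * L div 3 < L" using thirds assms(1) .
  have S1: "S \<noteq> {}" if "3 dvd L"
  proof (rule ccontr)
    assume "\<not> S \<noteq> {}"
    then have Se: "S = {}" by simp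
    have notin: "t \<notin> dset L I" if "I \<in> C" "t = L div 3 \<or> t = 2 * L div 3" for I t
    proof
      assume "t \<in> dset L I"
      then have "t \<in> dstar L I" using th that(2) unfolding dstar_def by auto
      then have "card (dstar L I) < 4"
        using equi_third[OF assms(2) L0 ew[OF that(1)] _ \<open>3 dvd L\<close>] b(2)[OF that(1)] that(2) by blast
      then show False using S(5) Se that(1) by force
    qed
    have "{L div 3, 2 * L div 3} \<subseteq> leave L C"
      unfolding leave_def using th notin by auto
    then show False using assms(6) that by blast
  qed
  have cardC: "\<forall>I\<in>C-S. card (dstar L I) = 4"
    using S(5) equi_card4[OF assms(2) L0 ew] b(2) by (meson DiffD1 le_antisym)
  have sum4: "(\<Sum>I\<in>C-S. card (dstar L I)) = 4 * card (C - S)"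
    using cardC by simp
  have cdiff: "card (C - S) = card C - card S" using card_Diff_subset S(1) b(1) finite_subset by blast
  have sle: "card S \<le> card C" using S(1) b(1) card_mono by blast
  have Cne: "C \<noteq> {}"
  proof
    assume "C = {}"
    then have "S = {}" using S(1) by blast
    then have "\<not> 3 dvd L" using S1 by blast
    moreover have "leave L C = {..<L}" using \<open>C = {}\<close> unfolding leave_def by simp
    ultimately have "L < 4" using assms(5) by simp
    then show False using assms(1) \<open>\<not> 3 dvd L\<close> by presburger
  qed
  define U where "U = (\<Union>I\<in>C. dstar L I)"
  have "(\<Union>I\<in>C. dset L I) = insert 0 U"
  proof -
    have "\<And>I. I \<in> C \<Longrightarrow> I \<noteq> {}" using b(2) by fastforce
    then have "(\<Union>I\<in>C. dset L I) = (\<Union>I\<in>C. insert 0 (dstar L I))" using dset_insert0 by simp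
    then show ?thesis unfolding U_def using Cne by blast
  qed
  then have lv: "leave L C = {..<L} - insert 0 U" unfolding leave_def by simp
  have U0: "0 \<notin> U" unfolding U_def dstar_def by blast
  have "U \<subseteq> {1..<L}" unfolding U_def using dstar_sub[OF L0] by (simp add: UN_subset_iff)
  then have Usub: "insert 0 U \<subseteq> {..<L}" using L0 by auto
  have finU: "finite U" using finite_subset[OF Usub] by simp
  have "card (leave L C) = L - card (insert 0 U)"
    unfolding lv using card_Diff_subset[OF _ Usub] finite_subset[OF Usub] by simp
  then have lam: "card (leave L C) + 1 + card U = L"
    using U0 finU card_mono[OF _ Usub] by simp
  have cU: "card U = 2 * card S + 4 * (card C - card S)" using S(6) sum4 cdiff U_def by simp
  have bound: "card C' \<le> card C" if "is_CAC L 3 C'" for C'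
  proof -
    have ub: "4 * card C' \<le> L + 1" "\<not> 3 dvd L \<Longrightarrow> 4 * card C' \<le> L - 1"
      using UB[OF that assms(2,1)] by auto
    obtain m where m: "L = 2 * m + 1" using assms(2) oddE by blast
    show ?thesis
    proof (cases "card S = 0")
      case True
      have "finite S" using finite_subset[OF S(1) b(1)] .
      then have "\<not> 3 dvd L" using S1 True by auto
      then have "4 * card C' \<le> L - 1" using ub(2) by blast
      then show ?thesis using arith0[OF _ lam cU True m assms(5)] by blast
    next
      case False
      then have "card S = 1" using S(2) by simp
      then show ?thesis using arith1[OF ub(1) lam cU _ sle m assms(5)] by blast
    qed
  qed
  have finM: "finite {card C' | C'. is_CAC L 3 C'}"
  proof -
    have "{card C' | C'. is_CAC L 3 C'} \<subseteq> {..L}" using UB[OF _ assms(2,1)] by fastforce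
    then show ?thesis using finite_subset by blast
  qed
  have finMe: "finite {card C' | C'. is_CAC L 3 C' \<and> equi_diff_code L 3 C'}"
    by (rule finite_subset[OF _ finM]) blast
  have M: "M_CAC L 3 = card C"
    unfolding M_CAC_def using bound assms(3) by (intro Max_eqI[OF finM]) auto
  have Me: "Me_CAC L 3 = card C"
    unfolding Me_CAC_def using bound assms(3,4) by (intro Max_eqI[OF finMe]) auto
  show ?thesis using M Me assms(3) unfolding optimal_CAC_def by simp
qed

end
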